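(* Let $f:[1,3]\to[1,3]$ be defined by $f(x)=-2x+5$ for $1\le x\le 2$ and $f(x)=x-1$ for $2\le x\le 3$. Then: (a) for every positive integer $m$, if $a_m$ denotes the number of distinct solutions $x\in[1,3]$ of $f^m(x)=x$, then $(a_m)_{m\ge1}$ is the Lucas sequence, i.e. $a_1=1$, $a_2=3$ and $a_{m+2}=a_{m+1}+a_m$ for all $m\ge1$; (b) for every positive integer $m$, $f$ has exactly $\Phi_1(m)/m$ distinct periodic orbits of minimal period $m$; (c) the sequence $(\Phi_1(m)/m)_{m\ge 6}$ is strictly increasing, and $\lim_{m\to\infty}\dfrac{\Phi_1(m+1)/(m+1)}{\Phi_1(m)/m}=\dfrac{1+\sqrt5}{2}$.
   Context: Here $f^m$ denotes the $m$-th iterate of $f$; a point $x$ has minimal period $m$ if $f^m(x)=x$ and its orbit $\{f^k(x):k\ge0\}$ has exactly $m$ elements. For an integer-valued function $\phi$ on the positive integers, define $\Phi(1,\phi)=\phi(1)$ and, if $m=p_1^{k_1}\cdots p_r^{k_r}$ with distinct primes $p_i$ and $r,k_i\ge1$, $\Phi(m,\phi)=\phi(m)-\sum_{i}\phi(m/p_i)+\sum_{i_1<i_2}\phi(m/(p_{i_1}p_{i_2}))-\cdots+(-1)^r\phi(m/(p_1\cdots p_r))$, the sums over indices in $\{1,\dots,r\}$ (equivalently $\Phi(m,\phi)=\sum_{d\mid m}\mu(m/d)\phi(d)$ with $\mu$ the Möbius function). Let $\phi$ be the Lucas sequence ($\phi(1)=1,\phi(2)=3,\phi(m+2)=\phi(m+1)+\phi(m)$)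 and set $\Phi_1(m)=\Phi(m,\phi)$. *)

theory Defs
  imports Complex_Main "HOL-Computational_Algebra.Primes"
begin

text \<open>The piecewise linear map on [1,3] (values outside [1,3] are irrelevant).\<close>
definition fmap :: "real \<Rightarrow> real" where
  "fmap x = (if x \<le> 2 then -2 * x + 5 else x - 1)"

text \<open>Lucas sequence: lucas 1 = 1, lucas 2 = 3, lucas (m+2) = lucas (m+1) + lucas m
  (lucas 0 = 2 is the usual convention, unused).\<close>
fun lucas :: "nat \<Rightarrow> int" where
  "lucas 0 = 2"
| "lucas (Suc 0) = 1"
| "lucas (Suc (Suc n)) = lucas (Suc n) + lucas n"

text \<open>The paper's inclusion-exclusion over distinct prime divisors of m;
  for m = 1 the set of prime factors is empty and this gives phi 1.\<close>
definition Phi :: "nat \<Rightarrow> (nat \<Rightarrow> int) \<Rightarrow> int" where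
  "Phi m phi = (\<Sum>S \<in> Pow (prime_factors m). (-1) ^ card S * phi (m div \<Prod>S))"

definition Phi1 :: "nat \<Rightarrow> int" where
  "Phi1 m = Phi m lucas"

definition orbit :: "(real \<Rightarrow> real) \<Rightarrow> real \<Rightarrow> real set" where
  "orbit g x = {(g ^^ k) x | k. True}"

definition has_min_period :: "(real \<Rightarrow> real) \<Rightarrow> nat \<Rightarrow> real \<Rightarrow> bool" where
  "has_min_period g m x \<longleftrightarrow> (g ^^ m) x = x \<and> finite (orbit g x) \<and> card (orbit g x) = m"

end

theory Submission
  imports Defs
begin


fun adm :: "bool list \<Rightarrow> bool" where
  "adm [] = True"
| "adm [b] = True"
| "adm (a # b # w) = (\<not>(a \<and> b) \<and> adm (b # w))"

lemma adm_nth: "adm w \<longleftrightarrow> (\<forall>j. Suc j < length w \<longrightarrow> \<not>(w!j \<and> w!Suc j))"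
proof (induction w rule: adm.induct)
  case (3 a b w)
  show ?case
  proof
    assume H: "adm (a # b # w)"
    show "\<forall>j. Suc j < length (a # b # w) \<longrightarrow> \<not>((a # b # w)!j \<and> (a # b # w)!Suc j)"
    proof (intro allI impI)
      fix j assume "Suc j < length (a # b # w)"
      then show "\<not>((a # b # w)!j \<and> (a # b # w)!Suc j)" using H 3
        by (cases j) auto
    qed
  next
    assume H: "\<forall>j. Suc j < length (a # b # w) \<longrightarrow> \<not>((a # b # w)!j \<and> (a # b # w)!Suc j)"
    have "\<not>(a \<and> b)" using H[rule_format, of 0] by simp
    moreover have "adm (b # w)" unfolding 3
    proof (intro allI impI)
      fix j assume "Suc j < length (b # w)"
      then show "\<not>((b # w)!j \<and> (b # w)!Suc j)" using H[rule_format, of "Suc j"] by simp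
    qed
    ultimately show "adm (a # b # w)" by simp
  qed
qed auto

definition cadm :: "bool list \<Rightarrow> bool" where
  "cadm w \<longleftrightarrow> adm w \<and> (w \<noteq> [] \<longrightarrow> \<not>(hd w \<and> last w))"

lemma adm_Cons_False: "adm (False # w) = adm w"
  by (cases w) auto

lemma adm_snoc_False: "adm (w @ [False]) = adm w"
proof (induction w rule: adm.induct)
  case (3 a b w) then show ?case by simp
next
  case (2 b) then show ?case by simp
qed simp

definition Lin :: "nat \<Rightarrow> bool list set" where
  "Lin n = {w. length w = n \<and> adm w}"

definition Cyc :: "nat \<Rightarrow> bool list set" where
  "Cyc n = {w. length w = n \<and> cadm w}"

fun lc :: "nat \<Rightarrow> nat" where
  "lc 0 = 1" | "lc (Suc 0) = 2" | "lc (Suc (Suc n)) = lc (Suc n) + lc n"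

lemma finite_Lin: "finite (Lin n)"
proof -
  have "Lin n \<subseteq> {w. set w \<subseteq> UNIV \<and> length w = n}" unfolding Lin_def by auto
  moreover have "finite {w::bool list. set w \<subseteq> UNIV \<and> length w = n}"
    by (rule finite_lists_length_eq) simp
  ultimately show ?thesis by (rule finite_subset)
qed

lemma Lin_rec: "Lin (Suc (Suc n)) = Cons False ` Lin (Suc n) \<union> (\<lambda>u. True # False # u) ` Lin n"
proof (intro equalityI subsetI)
  fix w assume "w \<in> Lin (Suc (Suc n))"
  then obtain a b u where w: "w = a # b # u" and "length u = n" "adm w"
    unfolding Lin_def by (auto simp: length_Suc_conv)
  show "w \<in> Cons False ` Lin (Suc n) \<union> (\<lambda>u. True # False # u) ` Lin n"
  proof (cases a)
    case True
    then have "\<not> b" "adm (b # u)" using \<open>adm w\<close> w by auto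
    then show ?thesis using w True \<open>length u = n\<close> by (auto simp: Lin_def adm_Cons_False)
  next
    case False
    then show ?thesis using w \<open>adm w\<close> \<open>length u = n\<close> by (auto simp: Lin_def)
  qed
next
  fix w assume "w \<in> Cons False ` Lin (Suc n) \<union> (\<lambda>u. True # False # u) ` Lin n"
  then show "w \<in> Lin (Suc (Suc n))"
    by (auto simp: Lin_def adm_Cons_False)
qed

lemma card_Lin: "card (Lin n) = lc n"
proof (induction n rule: lc.induct)
  case 1
  have "Lin 0 = {[]}" by (auto simp: Lin_def)
  then show ?case by simp
next
  case 2
  have "Lin (Suc 0) = {[False],[True]}" by (auto simp: Lin_def length_Suc_conv)
  then show ?case by simp
next
  case (3 n)
  have "card (Lin (Suc (Suc n))) = card (Cons False ` Lin (Suc n)) + card ((\<lambda>u. True # False # u) ` Lin n)"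
    unfolding Lin_rec by (rule card_Un_disjoint) (auto simp: finite_Lin)
  also have "\<dots> = card (Lin (Suc n)) + card (Lin n)"
    by (subst card_image, simp add: inj_on_def)+ simp
  finally show ?case using 3 by simp
qed

lemma Cyc_rec: "Cyc (Suc (Suc (Suc n))) = Cons False ` Lin (Suc (Suc n)) \<union> (\<lambda>u. True # False # u @ [False]) ` Lin n"
proof (intro equalityI subsetI)
  fix w assume "w \<in> Cyc (Suc (Suc (Suc n)))"
  then obtain a b u where w: "w = a # b # u" and "length u = Suc n" "cadm w"
    unfolding Cyc_def by (auto simp: length_Suc_conv)
  show "w \<in> Cons False ` Lin (Suc (Suc n)) \<union> (\<lambda>u. True # False # u @ [False]) ` Lin n"
  proof (cases a)
    case True
    obtain v c where u: "u = v @ [c]" using \<open>length u = Suc n\<close>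
      by (metis length_Suc_conv_rev)
    have "length v = n" using u \<open>length u = Suc n\<close> by simp
    have "\<not> b" "adm (b # u)" "\<not> c" using \<open>cadm w\<close> w True u by (auto simp: cadm_def)
    then have "adm v" using u by (simp add: adm_Cons_False adm_snoc_False)
    then show ?thesis using w True u \<open>\<not> b\<close> \<open>\<not> c\<close> \<open>length v = n\<close> by (auto simp: Lin_def)
  next
    case False
    then show ?thesis using w \<open>cadm w\<close> \<open>length u = Suc n\<close> by (auto simp: Lin_def cadm_def)
  qed
next
  fix w assume "w \<in> Cons False ` Lin (Suc (Suc n)) \<union> (\<lambda>u. True # False # u @ [False]) ` Lin n"
  then show "w \<in> Cyc (Suc (Suc (Suc n)))"
    by (auto simp: Lin_def Cyc_def cadm_def adm_Cons_False adm_snoc_False)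
qed

lemma lucas_lc: "lucas (Suc (Suc (Suc n))) = int (lc (Suc (Suc n)) + lc n)"
  by (induction n rule: lc.induct) simp_all

lemma Cyc1: "Cyc 1 = {[False]}"
proof -
  have "w \<in> Cyc 1 \<longleftrightarrow> w = [False]" for w
    by (cases w) (auto simp: Cyc_def cadm_def)
  then show ?thesis by blast
qed

lemma Cyc2: "Cyc 2 = {[False,False],[False,True],[True,False]}"
proof -
  have "w \<in> Cyc 2 \<longleftrightarrow> w \<in> {[False,False],[False,True],[True,False]}" for w
  proof (cases w)
    case (Cons a u)
    then show ?thesis
      by (cases u) (auto simp: Cyc_def cadm_def)
  qed (simp add: Cyc_def)
  then show ?thesis by blast
qed

lemma lucas2: "lucas 2 = 3"
proof -
  have "lucas 2 = lucas (Suc (Suc 0))" by (simp add: numeral_2_eq_2 del: lucas.simps)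
  also have "\<dots> = 3" by simp
  finally show ?thesis .
qed

lemma card_Cyc: "m \<ge> 1 \<Longrightarrow> int (card (Cyc m)) = lucas m"
proof -
  assume m: "m \<ge> 1"
  show ?thesis
  proof (cases "m \<le> 2")
    case True
    then have "m = 1 \<or> m = 2" using m by linarith
    then show ?thesis
    proof
      assume "m = 1" then show ?thesis using Cyc1 by simp
    next
      assume m2: "m = 2"
      have "int (card (Cyc 2)) = 3" unfolding Cyc2 by simp
      then show ?thesis using m2 lucas2 by simp
    qed
  next
    case False
    have "m = Suc (Suc (Suc (m - 3)))" using False by simp
    then obtain n where n: "m = Suc (Suc (Suc n))" by blast
    have "card (Cyc m) = card (Cons False ` Lin (Suc (Suc n))) + card ((\<lambda>u. True # False # u @ [False]) ` Lin n)"
      unfolding n Cyc_rec by (rule card_Un_disjoint) (auto simp: finite_Lin)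
    also have "\<dots> = card (Lin (Suc (Suc n))) + card (Lin n)"
      by (subst card_image, simp add: inj_on_def)+ simp
    finally have "card (Cyc m) = lc (Suc (Suc n)) + lc n" by (simp only: card_Lin)
    then show ?thesis using n lucas_lc[of n] by (simp del: lucas.simps lc.simps)
  qed
qed



fun gb :: "bool \<Rightarrow> real \<Rightarrow> real" where
  "gb False y = (5 - y) / 2" | "gb True y = y + 1"

fun G :: "bool list \<Rightarrow> real \<Rightarrow> real" where
  "G [] y = y" | "G (b # w) y = gb b (G w y)"

fun aG :: "bool list \<Rightarrow> real" where
  "aG [] = 1" | "aG (b # w) = (if b then 1 else -1/2) * aG w"

fun bG :: "bool list \<Rightarrow> real" where
  "bG [] = 0" | "bG (b # w) = (if b then bG w + 1 else (5 - bG w) / 2)"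

lemma G_aff: "G w y = aG w * y + bG w"
  by (induction w) (auto simp: field_simps)

lemma aG_le1: "\<bar>aG w\<bar> \<le> 1"
  by (induction w) (auto simp: abs_mult)

lemma aG_half: "False \<in> set w \<Longrightarrow> \<bar>aG w\<bar> \<le> 1/2"
proof (induction w)
  case (Cons b w)
  show ?case
  proof (cases b)
    case True
    then have "False \<in> set w" using Cons.prems by auto
    then show ?thesis using Cons.IH True by simp
  next
    case False
    then show ?thesis using aG_le1[of w] by (simp add: abs_mult)
  qed
qed simp

definition Dom :: "bool \<Rightarrow> real set" where
  "Dom b = (if b then {1..2} else {1..3})"
definition Img :: "bool \<Rightarrow> real set" where
  "Img b = (if b then {2..3} else {1..2})"

lemma gb_Img: "y \<in> Dom b \<Longrightarrow> gb b y \<in> Img b"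
  by (cases b) (auto simp: Dom_def Img_def)

lemma fmap_gb: "y \<in> Dom b \<Longrightarrow> fmap (gb b y) = y"
  by (cases b) (auto simp: Dom_def fmap_def field_simps)

lemma Img_Dom: "\<not>(a \<and> b) \<Longrightarrow> Img b \<subseteq> Dom a"
  by (auto simp: Dom_def Img_def)

lemma G_Img: "adm w \<Longrightarrow> w \<noteq> [] \<Longrightarrow> y \<in> Dom (last w) \<Longrightarrow> G w y \<in> Img (hd w)"
proof (induction w)
  case (Cons a u)
  show ?case
  proof (cases u)
    case Nil
    then show ?thesis using Cons.prems by (simp add: gb_Img)
  next
    case (Cons b v)
    have "adm u" "\<not>(a \<and> b)" using Cons.prems \<open>u = b # v\<close> by auto
    then have "G u y \<in> Img b" using Cons.IH Cons.prems \<open>u = b # v\<close> by simp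
    then have "G u y \<in> Dom a" using Img_Dom[OF \<open>\<not>(a \<and> b)\<close>] by blast
    then show ?thesis by (simp add: gb_Img)
  qed
qed simp

lemma cadm_False: "cadm w \<Longrightarrow> w \<noteq> [] \<Longrightarrow> False \<in> set w"
proof (rule ccontr)
  assume "cadm w" "w \<noteq> []" "False \<notin> set w"
  then have "hd w" "last w" by (metis (full_types) hd_in_set last_in_set)+
  then show False using \<open>cadm w\<close> \<open>w \<noteq> []\<close> by (simp add: cadm_def)
qed

lemma cadm_Img_Dom: "cadm w \<Longrightarrow> w \<noteq> [] \<Longrightarrow> Img (hd w) \<subseteq> Dom (last w)"
  by (rule Img_Dom) (auto simp: cadm_def)

definition xs :: "bool list \<Rightarrow> real" where
  "xs w = bG w / (1 - aG w)"

lemma aG_lt1: "cadm w \<Longrightarrow> w \<noteq> [] \<Longrightarrow> aG w \<le> 1/2"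
  using aG_half[OF cadm_False] by fastforce

lemma G_xs: "cadm w \<Longrightarrow> w \<noteq> [] \<Longrightarrow> G w (xs w) = xs w"
proof -
  assume a: "cadm w" "w \<noteq> []"
  have "aG w \<le> 1/2" using aG_lt1[OF a] .
  then show ?thesis unfolding G_aff xs_def by (simp add: field_simps)
qed

lemma G_unique: "cadm w \<Longrightarrow> w \<noteq> [] \<Longrightarrow> G w x = x \<Longrightarrow> x = xs w"
proof -
  assume a: "cadm w" "w \<noteq> []" and h: "G w x = x"
  have "aG w \<le> 1/2" using aG_lt1[OF a] .
  then show ?thesis using h unfolding G_aff xs_def by (simp add: field_simps)
qed

lemma xs_Dom: "cadm w \<Longrightarrow> w \<noteq> [] \<Longrightarrow> xs w \<in> Dom (last w)"
proof -
  assume a: "cadm w" "w \<noteq> []"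
  have adm: "adm w" using a by (simp add: cadm_def)
  obtain p q where pq: "Dom (last w) = {p..q}" "p \<le> q"
  proof (cases "last w")
    case True then show ?thesis using that[of 1 2] by (simp add: Dom_def)
  next
    case False then show ?thesis using that[of 1 3] by (simp add: Dom_def)
  qed
  have "G w p \<in> Img (hd w)" "G w q \<in> Img (hd w)"
    using G_Img[OF adm a(2)] pq by auto
  then have "G w p \<in> Dom (last w)" "G w q \<in> Dom (last w)"
    using cadm_Img_Dom[OF a] by auto
  then have 1: "p \<le> aG w * p + bG w" "aG w * q + bG w \<le> q" using pq by (auto simp: G_aff)
  have 2: "aG w * xs w + bG w = xs w" using G_xs[OF a] by (simp add: G_aff)
  have 3: "aG w \<le> 1/2" using aG_lt1[OF a] .
  have "p \<le> xs w"
  proof (rule ccontr)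
    assume "\<not> p \<le> xs w"
    then have "(aG w - 1) * (p - xs w) < 0" using 3 by (intro mult_neg_pos) auto
    then show False using 1 2 by (simp add: algebra_simps)
  qed
  moreover have "xs w \<le> q"
  proof (rule ccontr)
    assume "\<not> xs w \<le> q"
    then have "(aG w - 1) * (q - xs w) > 0" using 3 by (intro mult_neg_neg) auto
    then show False using 1 2 by (simp add: algebra_simps)
  qed
  ultimately show ?thesis using pq by auto
qed



lemma adm_drop: "adm w \<Longrightarrow> adm (drop i w)"
  by (simp add: adm_nth)

lemma Dom_sub: "Dom b \<subseteq> {1..3}" by (auto simp: Dom_def)
lemma Img_sub: "Img b \<subseteq> {1..3}" by (auto simp: Dom_def Img_def)

lemma orbit_step:
  assumes c: "cadm w" and len: "length w = m" and i: "i < m"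
  shows "G (drop i w) (xs w) \<in> Img (w!i)"
    and "G (drop (Suc i) w) (xs w) \<in> Dom (w!i)"
    and "fmap (G (drop i w) (xs w)) = G (drop (Suc i) w) (xs w)"
proof -
  have ne: "w \<noteq> []" using len i by auto
  have adm: "adm w" using c by (simp add: cadm_def)
  have xD: "xs w \<in> Dom (last w)" using xs_Dom[OF c ne] .
  have dr: "drop i w = w!i # drop (Suc i) w" using i len by (simp add: Cons_nth_drop_Suc)
  have "last (drop i w) = last w" using i len by simp
  then show 1: "G (drop i w) (xs w) \<in> Img (w!i)"
    using G_Img[OF adm_drop[OF adm], of i] xD dr by simp
  show 2: "G (drop (Suc i) w) (xs w) \<in> Dom (w!i)"
  proof (cases "Suc i = m")
    case True
    then have "drop (Suc i) w = []" using len by simp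
    moreover have "last w = w!i"
    proof -
      have "i = m - 1" using True by simp
      then show ?thesis using len ne by (simp add: last_conv_nth)
    qed
    ultimately show ?thesis using xD by simp
  next
    case False
    then have si: "Suc i < m" using i by simp
    have "last (drop (Suc i) w) = last w" using si len by simp
    moreover have "drop (Suc i) w = w!Suc i # drop (Suc (Suc i)) w" using si len by (simp add: Cons_nth_drop_Suc)
    ultimately have "G (drop (Suc i) w) (xs w) \<in> Img (w!Suc i)"
      using G_Img[OF adm_drop[OF adm], of "Suc i"] xD by simp
    moreover have "\<not>(w!i \<and> w!Suc i)" using adm si len by (simp add: adm_nth)
    ultimately show ?thesis using Img_Dom by blast
  qed
  show "fmap (G (drop i w) (xs w)) = G (drop (Suc i) w) (xs w)"
    using dr fmap_gb[OF 2] by simp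
qed

lemma orbit_xs:
  assumes c: "cadm w" and len: "length w = m"
  shows "i \<le> m \<Longrightarrow> (fmap ^^ i) (xs w) = G (drop i w) (xs w)"
proof (induction i)
  case 0
  have "w \<noteq> [] \<Longrightarrow> G w (xs w) = xs w" using G_xs c by blast
  then show ?case by (cases w) auto
next
  case (Suc i)
  then show ?case using orbit_step(3)[OF c len, of i] by simp
qed

lemma xs_fix:
  assumes c: "cadm w" and len: "length w = m" and m: "m \<ge> 1"
  shows "(fmap ^^ m) (xs w) = xs w" "xs w \<in> {1..3}"
proof -
  show "(fmap ^^ m) (xs w) = xs w" using orbit_xs[OF c len, of m] len by simp
  have "w \<noteq> []" using len m by auto
  then show "xs w \<in> {1..3}" using xs_Dom[OF c] Dom_sub by blast
qed

lemma funpow_mod: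
  assumes "(g ^^ m) x = x"
  shows "(g ^^ k) x = (g ^^ (k mod m)) x"
proof -
  have q: "(g ^^ (q * m)) x = x" for q
    by (induction q) (simp_all add: funpow_add assms)
  have "(g ^^ (k mod m + (k div m) * m)) x = (g ^^ (k mod m)) ((g ^^ ((k div m) * m)) x)"
    by (simp only: funpow_add comp_apply)
  then show ?thesis using q by simp
qed

lemma cadm_cyc:
  assumes c: "cadm w" and len: "length w = m" and m: "m \<ge> 1"
  shows "w!(k mod m) \<Longrightarrow> \<not> w!(Suc k mod m)"
proof -
  assume h: "w!(k mod m)"
  have adm: "adm w" using c by (simp add: cadm_def)
  have ne: "w \<noteq> []" using len m by auto
  show "\<not> w!(Suc k mod m)"
  proof (cases "Suc (k mod m) < m")
    case True
    then have "Suc k mod m = Suc (k mod m)" by (simp add: mod_Suc)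
    then show ?thesis using adm True len h by (simp add: adm_nth)
  next
    case False
    then have km: "k mod m = m - 1" using m
      using mod_less_divisor[of m k] m by linarith
    then have "Suc k mod m = 0" using m by (simp add: mod_Suc)
    moreover have "w!(k mod m) = last w" using km len ne by (simp add: last_conv_nth)
    moreover have "w!0 = hd w" using ne by (simp add: hd_conv_nth)
    ultimately show ?thesis using c h ne by (simp add: cadm_def)
  qed
qed

lemma fmap_1: "fmap 1 = 3" and fmap_2: "fmap 2 = 1" and fmap_3: "fmap 3 = 2"
  by (simp_all add: fmap_def)

lemma itin_xs:
  assumes c: "cadm w" and len: "length w = m" and m: "m \<ge> 1" and i: "i < m"
  shows "w!i \<longleftrightarrow> (fmap ^^ i) (xs w) > 2"
proof -
  define Y where "Y k = (fmap ^^ k) (xs w)" for k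
  define W where "W k = w!(k mod m)" for k
  have fx: "(fmap ^^ m) (xs w) = xs w" using xs_fix[OF c len m] by simp
  have mp: "m > 0" using m by simp
  have YI: "Y k \<in> Img (W k)" for k
  proof -
    have "Y k = (fmap ^^ (k mod m)) (xs w)" unfolding Y_def using funpow_mod[OF fx] by simp
    also have "\<dots> = G (drop (k mod m) w) (xs w)" using orbit_xs[OF c len, of "k mod m"] mp
      by (simp add: less_imp_le)
    finally show ?thesis unfolding W_def using orbit_step(1)[OF c len, of "k mod m"] mp by simp
  qed
  have YS: "Y (Suc k) = fmap (Y k)" for k unfolding Y_def by simp
  have WW: "W k \<Longrightarrow> \<not> W (Suc k)" for k unfolding W_def using cadm_cyc[OF c len m] by blast
  have step: "Y j = 2 \<Longrightarrow> Y (j + 3) = 2 \<and> \<not> W (j + 3)" for j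
  proof -
    assume "Y j = 2"
    then have "Y (Suc j) = 1" using YS fmap_2 by simp
    then have y2: "Y (Suc (Suc j)) = 3" using YS fmap_1 by simp
    then have y3: "Y (Suc (Suc (Suc j))) = 2" using YS fmap_3 by simp
    have "W (Suc (Suc j))" using YI[of "Suc (Suc j)"] y2 by (auto simp: Img_def split: if_splits)
    then have "\<not> W (Suc (Suc (Suc j)))" using WW by blast
    then show ?thesis using y3 by (simp add: numeral_3_eq_3)
  qed
  have not2: "W k \<Longrightarrow> Y k \<noteq> 2" for k
  proof
    assume wk: "W k" and yk: "Y k = 2"
    have all: "Y (k + 3 * n) = 2" for n
    proof (induction n)
      case (Suc n)
      have "k + 3 * Suc n = (k + 3 * n) + 3" by simp
      then show ?case using step[OF Suc.IH] by (metis (no_types))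
    qed (simp add: yk)
    have "\<not> W (k + 3 * (m - 1) + 3)" using step[OF all[of "m - 1"]] by simp
    moreover have "k + 3 * (m - 1) + 3 = k + m * 3" using m by (simp add: algebra_simps)
    ultimately have "\<not> W (k + m * 3)" by metis
    moreover have "W (k + m * 3) = W k" unfolding W_def by simp
    ultimately show False using wk by simp
  qed
  have "W i = w!i" unfolding W_def using i by simp
  moreover have "Y i \<in> Img (W i)" by (rule YI)
  ultimately show ?thesis using not2[of i] unfolding Y_def by (auto simp: Img_def split: if_splits)
qed



definition itin :: "real \<Rightarrow> nat \<Rightarrow> bool list" where
  "itin x m = map (\<lambda>i. (fmap ^^ i) x > 2) [0..<m]"

lemma fmap_range: "x \<in> {1..3} \<Longrightarrow> fmap x \<in> {1..3}"
  by (auto simp: fmap_def)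

lemma funpow_range: "x \<in> {1..3} \<Longrightarrow> (fmap ^^ i) x \<in> {1..3}"
  by (induction i) (auto simp: fmap_range simp del: atLeastAtMost_iff)

lemma gb_fmap: "gb (y > 2) (fmap y) = y"
  by (auto simp: fmap_def field_simps)

lemma G_itin: "i \<le> m \<Longrightarrow> G (drop i (itin x m)) ((fmap ^^ m) x) = (fmap ^^ i) x"
proof (induction rule: inc_induct)
  case base then show ?case by (simp add: itin_def)
next
  case (step i)
  have "drop i (itin x m) = ((fmap ^^ i) x > 2) # drop (Suc i) (itin x m)"
    using step.hyps by (simp add: itin_def Cons_nth_drop_Suc[symmetric])
  then show ?case using step.IH gb_fmap[of "(fmap ^^ i) x"] by simp
qed

lemma itin_Cyc:
  assumes x: "x \<in> {1..3}" and fx: "(fmap ^^ m) x = x" and m: "m \<ge> 1"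
  shows "itin x m \<in> Cyc m"
proof -
  have A: "(fmap ^^ j) x > 2 \<Longrightarrow> \<not> (fmap ^^ Suc j) x > 2" for j
    using funpow_range[OF x, of j] by (auto simp: fmap_def)
  have "adm (itin x m)" unfolding adm_nth itin_def using A by auto
  moreover have "\<not>(hd (itin x m) \<and> last (itin x m))"
  proof
    assume h: "hd (itin x m) \<and> last (itin x m)"
    have ne: "itin x m \<noteq> []" using m by (simp add: itin_def)
    have "hd (itin x m) = (x > 2)" using m by (simp add: itin_def hd_map hd_upt)
    moreover have "last (itin x m) = ((fmap ^^ (m - 1)) x > 2)" using m
      by (simp add: itin_def last_map)
    moreover have sm: "Suc (m - 1) = m" using m by simp
    ultimately have "x > 2" "(fmap ^^ (m - 1)) x > 2" using h by auto
    then have "\<not> (fmap ^^ Suc (m - 1)) x > 2" using A by blast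
    then show False using sm fx \<open>x > 2\<close> by simp
  qed
  ultimately show ?thesis by (simp add: Cyc_def cadm_def itin_def)
qed

lemma Cyc_props: "w \<in> Cyc m \<Longrightarrow> m \<ge> 1 \<Longrightarrow> cadm w \<and> length w = m \<and> w \<noteq> []"
  by (auto simp: Cyc_def)

lemma bij_Fix: "m \<ge> 1 \<Longrightarrow> bij_betw (\<lambda>x. itin x m) {x \<in> {1..3::real}. (fmap ^^ m) x = x} (Cyc m)"
proof -
  assume m: "m \<ge> 1"
  let ?F = "{x \<in> {1..3::real}. (fmap ^^ m) x = x}"
  have xs_itin: "xs (itin x m) = x" if "x \<in> ?F" for x
  proof -
    have c: "itin x m \<in> Cyc m" using itin_Cyc that m by auto
    have "G (itin x m) x = x" using G_itin[of 0 m x] that by simp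
    then show ?thesis using G_unique Cyc_props[OF c m] by metis
  qed
  have "bij_betw (\<lambda>x. itin x m) ?F (Cyc m)"
  proof (rule bij_betw_imageI)
    show "inj_on (\<lambda>x. itin x m) ?F"
      by (rule inj_on_inverseI[where g = xs]) (rule xs_itin)
    show "(\<lambda>x. itin x m) ` ?F = Cyc m"
    proof
      show "(\<lambda>x. itin x m) ` ?F \<subseteq> Cyc m" using itin_Cyc m by auto
      show "Cyc m \<subseteq> (\<lambda>x. itin x m) ` ?F"
      proof
        fix w assume w: "w \<in> Cyc m"
        have c: "cadm w" "length w = m" using w by (auto simp: Cyc_def)
        have "itin (xs w) m = w"
          by (rule nth_equalityI) (auto simp: itin_def c itin_xs[OF c m])
        moreover have "xs w \<in> ?F" using xs_fix[OF c m] by simp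
        ultimately show "w \<in> (\<lambda>x. itin x m) ` ?F" by force
      qed
    qed
  qed
  then show ?thesis .
qed

lemma card_Fix: "m \<ge> 1 \<Longrightarrow> card {x \<in> {1..3::real}. (fmap ^^ m) x = x} = card (Cyc m)"
  using bij_Fix bij_betw_same_card by blast

lemma finite_Cyc: "finite (Cyc m)"
proof -
  have "Cyc m \<subseteq> {w. set w \<subseteq> UNIV \<and> length w = m}" unfolding Cyc_def by auto
  moreover have "finite {w::bool list. set w \<subseteq> UNIV \<and> length w = m}"
    by (rule finite_lists_length_eq) simp
  ultimately show ?thesis by (rule finite_subset)
qed

lemma finite_Fix: "m \<ge> 1 \<Longrightarrow> finite {x \<in> {1..3::real}. (fmap ^^ m) x = x}"
  using bij_Fix bij_betw_finite finite_Cyc by blast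

theorem partA: "m \<ge> 1 \<Longrightarrow> int (card {x \<in> {1..3::real}. (fmap ^^ m) x = x}) = lucas m"
proof -
  assume m: "m \<ge> 1"
  show ?thesis using card_Fix[OF m] card_Cyc[OF m] by simp
qed



definition per :: "(real \<Rightarrow> real) \<Rightarrow> real \<Rightarrow> nat" where
  "per g x = (LEAST k. 0 < k \<and> (g ^^ k) x = x)"

lemma funpow_mult_fix: "(g ^^ m) x = x \<Longrightarrow> (g ^^ (q * m)) x = x"
  by (induction q) (simp_all add: funpow_add)

lemma per_props:
  assumes "(g ^^ n) x = x" "0 < n"
  shows "0 < per g x" "(g ^^ per g x) x = x" "per g x \<le> n"
proof -
  have "0 < per g x \<and> (g ^^ per g x) x = x"
    unfolding per_def by (rule LeastI[of _ n]) (use assms in auto)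
  then show "0 < per g x" "(g ^^ per g x) x = x" by auto
  show "per g x \<le> n" unfolding per_def by (rule Least_le) (use assms in auto)
qed

lemma per_min: "0 < k \<Longrightarrow> k < per g x \<Longrightarrow> (g ^^ k) x \<noteq> x"
  unfolding per_def using not_less_Least by blast

lemma per_dvd:
  assumes "(g ^^ n) x = x" "0 < n"
  shows "per g x dvd n"
proof -
  let ?p = "per g x"
  have p: "0 < ?p" "(g ^^ ?p) x = x" using per_props[OF assms] by auto
  have "(g ^^ (n mod ?p)) x = x" using funpow_mod[OF p(2), of n] assms(1) by simp
  moreover have "n mod ?p < ?p" using p(1) by simp
  ultimately have "n mod ?p = 0" using per_min[of "n mod ?p" g x] by auto
  then show ?thesis by (simp add: dvd_eq_mod_eq_0)
qed

lemma orbit_per: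
  assumes "(g ^^ n) x = x" "0 < n"
  shows "orbit g x = (\<lambda>k. (g ^^ k) x) ` {..<per g x}"
proof -
  let ?p = "per g x"
  have p: "0 < ?p" "(g ^^ ?p) x = x" using per_props[OF assms] by auto
  show ?thesis
  proof
    show "orbit g x \<subseteq> (\<lambda>k. (g ^^ k) x) ` {..<?p}"
    proof
      fix y assume "y \<in> orbit g x"
      then obtain k where "y = (g ^^ k) x" by (auto simp: orbit_def)
      then have "y = (g ^^ (k mod ?p)) x" using funpow_mod[OF p(2)] by simp
      moreover have "k mod ?p < ?p" using p(1) by simp
      ultimately show "y \<in> (\<lambda>k. (g ^^ k) x) ` {..<?p}" by auto
    qed
    show "(\<lambda>k. (g ^^ k) x) ` {..<?p} \<subseteq> orbit g x" by (auto simp: orbit_def)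
  qed
qed

lemma inj_per:
  assumes "(g ^^ n) x = x" "0 < n"
  shows "inj_on (\<lambda>k. (g ^^ k) x) {..<per g x}"
proof -
  let ?p = "per g x"
  have p: "0 < ?p" "(g ^^ ?p) x = x" using per_props[OF assms] by auto
  have main: "i < j \<Longrightarrow> j < ?p \<Longrightarrow> (g ^^ i) x \<noteq> (g ^^ j) x" for i j
  proof
    assume ij: "i < j" "j < ?p" and e: "(g ^^ i) x = (g ^^ j) x"
    have "(g ^^ (?p - j + i)) x = (g ^^ (?p - j)) ((g ^^ i) x)" by (simp only: funpow_add comp_apply)
    also have "\<dots> = (g ^^ (?p - j)) ((g ^^ j) x)" using e by simp
    also have "\<dots> = (g ^^ (?p - j + j)) x" by (simp only: funpow_add comp_apply)
    also have "\<dots> = (g ^^ ?p) x" using ij by (simp add: le_add_diff_inverse2 less_imp_le)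
    finally have "(g ^^ (?p - j + i)) x = x" using p(2) by simp
    moreover have a1: "0 < ?p - j + i" using ij by linarith
    moreover have a2: "?p - j + i < ?p" using ij by linarith
    ultimately show False using per_min[OF a1 a2] by simp
  qed
  show ?thesis
  proof (rule inj_onI)
    fix i j assume "i \<in> {..<?p}" "j \<in> {..<?p}" "(g ^^ i) x = (g ^^ j) x"
    then show "i = j" using main[of i j] main[of j i] by (metis lessThan_iff linorder_neqE_nat)
  qed
qed

lemma card_orbit:
  assumes "(g ^^ n) x = x" "0 < n"
  shows "finite (orbit g x)" "card (orbit g x) = per g x"
  using orbit_per[OF assms] inj_per[OF assms] by (auto simp: card_image)

lemma hmp_iff:
  assumes "(g ^^ n) x = x" "0 < n"
  shows "has_min_period g d x \<longleftrightarrow> d = per g x"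
  using card_orbit[OF assms] per_props[OF assms] unfolding has_min_period_def by auto

lemma hmp_pos:
  assumes "has_min_period g d x"
  shows "0 < d" "(g ^^ d) x = x"
proof -
  have "x \<in> orbit g x" unfolding orbit_def by (auto intro: exI[of _ 0])
  then have "orbit g x \<noteq> {}" by auto
  then show "0 < d" using assms unfolding has_min_period_def by auto
  show "(g ^^ d) x = x" using assms unfolding has_min_period_def by auto
qed

lemma orbit_shift:
  assumes "(g ^^ m) x = x" "0 < m"
  shows "orbit g ((g ^^ k) x) = orbit g x"
proof
  show "orbit g ((g ^^ k) x) \<subseteq> orbit g x"
  proof
    fix y assume "y \<in> orbit g ((g ^^ k) x)"
    then obtain j where y: "y = (g ^^ j) ((g ^^ k) x)" by (auto simp: orbit_def)
    then have "y = (g ^^ (j + k)) x" by (simp add: funpow_add)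
    then show "y \<in> orbit g x" unfolding orbit_def by blast
  qed
  show "orbit g x \<subseteq> orbit g ((g ^^ k) x)"
  proof
    fix y assume "y \<in> orbit g x"
    then obtain j where y: "y = (g ^^ j) x" by (auto simp: orbit_def)
    have "(g ^^ (j + (m - 1) * k)) ((g ^^ k) x) = (g ^^ (j + (m - 1) * k + k)) x"
      by (simp add: funpow_add)
    also have "j + (m - 1) * k + k = j + k * m"
    proof -
      have "(m - 1) * k + k = m * k" using assms(2) by (cases m) auto
      then show ?thesis by (simp add: mult.commute)
    qed
    also have "(g ^^ (j + k * m)) x = (g ^^ j) ((g ^^ (k * m)) x)" by (simp add: funpow_add)
    also have "\<dots> = y" using funpow_mult_fix[OF assms(1)] y by simp
    finally show "y \<in> orbit g ((g ^^ k) x)" unfolding orbit_def by blast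
  qed
qed



definition Fx :: "nat \<Rightarrow> real set" where
  "Fx m = {x \<in> {1..3::real}. (fmap ^^ m) x = x}"

definition Pm :: "nat \<Rightarrow> real set" where
  "Pm d = {x \<in> {1..3::real}. has_min_period fmap d x}"

lemma Pm_sub: "Pm d \<subseteq> Fx d"
  unfolding Pm_def Fx_def using hmp_pos by blast

lemma Pm_pos: "x \<in> Pm d \<Longrightarrow> 0 < d"
  unfolding Pm_def using hmp_pos by blast

lemma finite_Pm: "finite (Pm d)"
proof (cases "d = 0")
  case True
  then have "Pm d = {}" using Pm_pos by blast
  then show ?thesis by simp
next
  case False
  then have "finite (Fx d)" using finite_Fix[of d] by (simp add: Fx_def)
  then show ?thesis using finite_subset[OF Pm_sub] by blast
qed

lemma Fx_decomp:
  assumes m: "m \<ge> 1"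
  shows "Fx m = (\<Union>d \<in> {d. d dvd m}. Pm d)"
proof
  show "Fx m \<subseteq> (\<Union>d \<in> {d. d dvd m}. Pm d)"
  proof
    fix x assume x: "x \<in> Fx m"
    then have fx: "(fmap ^^ m) x = x" "x \<in> {1..3}" by (auto simp: Fx_def)
    have mp: "0 < m" using m by simp
    have "has_min_period fmap (per fmap x) x" using hmp_iff[OF fx(1) mp] by simp
    moreover have "per fmap x dvd m" using per_dvd[OF fx(1) mp] .
    ultimately show "x \<in> (\<Union>d \<in> {d. d dvd m}. Pm d)" using fx(2) by (auto simp: Pm_def)
  qed
  show "(\<Union>d \<in> {d. d dvd m}. Pm d) \<subseteq> Fx m"
  proof
    fix x assume "x \<in> (\<Union>d \<in> {d. d dvd m}. Pm d)"
    then obtain d where d: "d dvd m" "x \<in> Pm d" by blast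
    from d(1) obtain q where q: "m = d * q" by (rule dvdE)
    have h: "has_min_period fmap d x" "x \<in> {1..3}" using d(2) by (simp_all add: Pm_def)
    have "(fmap ^^ d) x = x" using hmp_pos(2)[OF h(1)] .
    then have "(fmap ^^ (q * d)) x = x" by (rule funpow_mult_fix)
    moreover have "q * d = m" using q by simp
    ultimately show "x \<in> Fx m" using h(2) by (simp add: Fx_def)
  qed
qed

lemma Pm_disj: "d \<noteq> e \<Longrightarrow> Pm d \<inter> Pm e = {}"
  unfolding Pm_def has_min_period_def by auto

lemma lucas_sum:
  assumes m: "m \<ge> 1"
  shows "lucas m = (\<Sum>d \<in> {d. d dvd m}. int (card (Pm d)))"
proof -
  have "lucas m = int (card (Fx m))" using partA[OF m] by (simp add: Fx_def)
  also have "card (Fx m) = (\<Sum>d \<in> {d. d dvd m}. card (Pm d))"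
    unfolding Fx_decomp[OF m]
    by (rule card_UN_disjoint) (use m finite_Pm Pm_disj in auto)
  finally show ?thesis by simp
qed

definition Om :: "nat \<Rightarrow> real set set" where
  "Om m = {orbit fmap x | x. x \<in> {1..3::real} \<and> has_min_period fmap m x}"

lemma orbit_in_Pm:
  assumes x: "x \<in> Pm m" and y: "y \<in> orbit fmap x"
  shows "y \<in> Pm m" "orbit fmap y = orbit fmap x"
proof -
  have fx: "(fmap ^^ m) x = x" "0 < m" "x \<in> {1..3}" using x hmp_pos Pm_pos by (auto simp: Pm_def)
  obtain k where k: "y = (fmap ^^ k) x" using y by (auto simp: orbit_def)
  show oe: "orbit fmap y = orbit fmap x" using orbit_shift[OF fx(1,2)] k by simp
  have "(fmap ^^ m) y = (fmap ^^ (m + k)) x" using k by (simp add: funpow_add)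
  also have "\<dots> = (fmap ^^ (k + m)) x" by (simp add: add.commute)
  also have "\<dots> = (fmap ^^ k) ((fmap ^^ m) x)" by (simp add: funpow_add)
  finally
  have fy: "(fmap ^^ m) y = y" using fx(1) k by simp
  have "has_min_period fmap m y"
    using x oe fy unfolding Pm_def has_min_period_def by auto
  moreover have "y \<in> {1..3}" using k funpow_range fx(3) by blast
  ultimately show "y \<in> Pm m" by (simp add: Pm_def)
qed

lemma card_Om: "m * card (Om m) = card (Pm m)"
proof -
  have U: "\<Union>(Om m) = Pm m"
  proof
    show "\<Union>(Om m) \<subseteq> Pm m"
    proof
      fix y assume "y \<in> \<Union>(Om m)"
      then obtain c where c: "c \<in> Om m" "y \<in> c" by blast
      then obtain x where x: "c = orbit fmap x" "x \<in> Pm m" unfolding Om_def Pm_def by blast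
      show "y \<in> Pm m" using orbit_in_Pm(1)[OF x(2)] x(1) c(2) by simp
    qed
    show "Pm m \<subseteq> \<Union>(Om m)"
    proof
      fix x assume x: "x \<in> Pm m"
      have "x \<in> orbit fmap x" unfolding orbit_def by (auto intro: exI[of _ 0])
      then show "x \<in> \<Union>(Om m)" using x unfolding Om_def Pm_def by blast
    qed
  qed
  have fin: "finite (Om m)"
  proof -
    have "Om m = orbit fmap ` Pm m" unfolding Om_def Pm_def by blast
    then show ?thesis using finite_Pm by simp
  qed
  have "m * card (Om m) = card (\<Union>(Om m))"
  proof (rule card_partition)
    show "finite (Om m)" by (rule fin)
    show "finite (\<Union>(Om m))" using U finite_Pm by simp
    show "\<And>c. c \<in> Om m \<Longrightarrow> card c = m" unfolding Om_def has_min_period_def by auto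
    show "\<And>c1 c2. c1 \<in> Om m \<Longrightarrow> c2 \<in> Om m \<Longrightarrow> c1 \<noteq> c2 \<Longrightarrow> c1 \<inter> c2 = {}"
    proof -
      fix c1 c2 assume c: "c1 \<in> Om m" "c2 \<in> Om m" "c1 \<noteq> c2"
      obtain x1 x2 where x: "c1 = orbit fmap x1" "c2 = orbit fmap x2" "x1 \<in> Pm m" "x2 \<in> Pm m"
        using c(1,2) unfolding Om_def Pm_def by blast
      show "c1 \<inter> c2 = {}"
      proof (rule ccontr)
        assume "c1 \<inter> c2 \<noteq> {}"
        then obtain z where z: "z \<in> orbit fmap x1" "z \<in> orbit fmap x2" using x by blast
        have "orbit fmap z = orbit fmap x1" by (rule orbit_in_Pm(2)[OF x(3) z(1)])
        moreover have "orbit fmap z = orbit fmap x2" by (rule orbit_in_Pm(2)[OF x(4) z(2)])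
        ultimately have "orbit fmap x1 = orbit fmap x2" by simp
        then show False using c x by simp
      qed
    qed
  qed
  then show ?thesis using U by simp
qed



lemma prod_primes_dvd:
  fixes n :: nat
  shows "finite S \<Longrightarrow> (\<forall>q\<in>S. prime q \<and> q dvd n) \<Longrightarrow> \<Prod>S dvd n"
proof (induction S rule: finite_induct)
  case (insert q S)
  have cop: "coprime q (\<Prod>S)"
  proof (rule prod_coprime_right)
    fix r assume "r \<in> S"
    then have "prime r" "r \<noteq> q" using insert by auto
    then show "coprime q r" using insert.prems primes_coprime by auto
  qed
  have "q dvd n" "\<Prod>S dvd n" using insert by auto
  then have "q * \<Prod>S dvd n" using cop by (simp add: divides_mult)
  then show ?case using insert by simp
qed simp

lemma alt_sum_Pow: "finite A \<Longrightarrow> (\<Sum>S\<in>Pow A. (-1::int) ^ card S) = (if A = {} then 1 else 0)"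
proof -
  assume fin: "finite A"
  show ?thesis
  proof (cases "A = {}")
    case True then show ?thesis by simp
  next
    case False
    have "{} \<subset> A" using False by auto
    then have "card {T. T \<subseteq> A \<and> {} \<subseteq> T \<and> even (card T)} = card {T. T \<subseteq> A \<and> {} \<subseteq> T \<and> odd (card T)}"
      by (rule card_subsupersets_even_odd[OF fin])
    then have "card {x. x \<in> Pow A \<and> even (card x)} = card {x. x \<in> Pow A \<and> odd (card x)}" by simp
    then have "(\<Sum>S\<in>Pow A. (-1::int) ^ card S) = 0"
      by (rule sum_alternating_cancels[OF finite_Pow_iff[THEN iffD2, OF fin]])
    then show ?thesis using False by simp
  qed
qed

lemma pf_empty: "(n::nat) > 0 \<Longrightarrow> prime_factors n = {} \<longleftrightarrow> n = 1"
proof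
  assume n: "n > 0" "prime_factors n = {}"
  show "n = 1"
  proof (rule ccontr)
    assume "n \<noteq> 1"
    then have "n > 1" using n by simp
    then obtain q where "prime q" "q dvd n" using prime_factor_nat by (metis less_irrefl)
    then have "q \<in> prime_factors n" using n by (intro prime_factorsI) auto
    then show False using n(2) by blast
  qed
qed simp

lemma mobius_inv:
  fixes p L :: "nat \<Rightarrow> int"
  assumes h: "\<And>n. n \<ge> 1 \<Longrightarrow> L n = (\<Sum>d\<in>{d. d dvd n}. p d)"
    and m: "m \<ge> 1"
  shows "Phi m L = p m"
proof -
  let ?P = "prime_factors m"
  let ?D = "{d. d dvd m}"
  have m0: "m \<noteq> 0" using m by simp
  have finD: "finite ?D" using m0 by simp
  have finP: "finite ?P" by simp
  have Sdvd: "\<Prod>S dvd m" if "S \<subseteq> ?P" for S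
    by (rule prod_primes_dvd) (use that finite_subset[OF that finP] in \<open>auto simp: in_prime_factors_iff\<close>)
  have divdvd: "m div e dvd m" if "e dvd m" for e
    using dvd_triv_right[of "m div e" e] dvd_mult_div_cancel[OF that] by simp
  have Spos: "\<Prod>S > 0" if "S \<subseteq> ?P" for S
  proof (rule ccontr)
    assume "\<not> \<Prod>S > 0"
    then have "\<Prod>S = 0" by simp
    then show False using Sdvd[OF that] m0 by simp
  qed
  have DS: "m div \<Prod>S \<ge> 1" if "S \<subseteq> ?P" for S
  proof -
    have "m div \<Prod>S \<noteq> 0" using dvd_div_eq_0_iff[OF Sdvd[OF that]] m0 by simp
    then show ?thesis by simp
  qed
  have key: "{S \<in> Pow ?P. d dvd m div \<Prod>S} = Pow (prime_factors (m div d))" if d: "d dvd m" for d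
  proof -
    have d0: "d \<noteq> 0" using d m0 by auto
    have md0: "m div d \<noteq> 0" using dvd_div_eq_0_iff[OF d] m0 by simp
    have eq: "d dvd m div \<Prod>S \<longleftrightarrow> \<Prod>S dvd m div d" if "S \<subseteq> ?P" for S
    proof -
      have "d dvd m div \<Prod>S \<longleftrightarrow> d * \<Prod>S dvd m"
        using dvd_div_iff_mult[of "\<Prod>S" m d] Sdvd[OF that] Spos[OF that] by simp
      also have "\<dots> \<longleftrightarrow> \<Prod>S * d dvd m" by (simp add: mult.commute)
      also have "\<dots> \<longleftrightarrow> \<Prod>S dvd m div d" using dvd_div_iff_mult[of d m "\<Prod>S"] d d0 by simp
      finally show ?thesis .
    qed
    show ?thesis
    proof (intro equalityI subsetI)
      fix S assume "S \<in> {S \<in> Pow ?P. d dvd m div \<Prod>S}"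
      then have S: "S \<subseteq> ?P" "\<Prod>S dvd m div d" using eq by auto
      have "S \<subseteq> prime_factors (m div d)"
      proof
        fix q assume q: "q \<in> S"
        have "q dvd \<Prod>S" using dvd_prodI[OF finite_subset[OF S(1) finP] q, of "\<lambda>x. x"] by simp
        then have "q dvd m div d" using S(2) by (rule dvd_trans)
        moreover have "prime q" using q S(1) by (auto simp: in_prime_factors_iff)
        ultimately show "q \<in> prime_factors (m div d)" using md0 by (auto intro: prime_factorsI)
      qed
      then show "S \<in> Pow (prime_factors (m div d))" by simp
    next
      fix S assume "S \<in> Pow (prime_factors (m div d))"
      then have S: "S \<subseteq> prime_factors (m div d)" by simp
      have fin: "finite S" using finite_subset[OF S] by simp
      have sub: "S \<subseteq> ?P"
      proof
        fix q assume "q \<in> S"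
        then have "prime q" "q dvd m div d" using S by (auto simp: in_prime_factors_iff)
        moreover have "m div d dvd m" using divdvd[OF d] .
        ultimately have "q dvd m" "prime q" by (auto intro: dvd_trans)
        then show "q \<in> ?P" using m0 by (intro prime_factorsI) auto
      qed
      have "\<Prod>S dvd m div d"
        by (rule prod_primes_dvd[OF fin]) (use S in \<open>auto simp: in_prime_factors_iff\<close>)
      then show "S \<in> {S \<in> Pow ?P. d dvd m div \<Prod>S}" using eq[OF sub] sub by simp
    qed
  qed
  have "Phi m L = (\<Sum>S\<in>Pow ?P. (-1) ^ card S * (\<Sum>d\<in>{d. d dvd m div \<Prod>S}. p d))"
    unfolding Phi_def by (rule sum.cong) (use h DS in auto)
  also have "\<dots> = (\<Sum>S\<in>Pow ?P. \<Sum>d\<in>?D. if d dvd m div \<Prod>S then (-1) ^ card S * p d else 0)"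
  proof (rule sum.cong[OF refl])
    fix S assume S: "S \<in> Pow ?P"
    have sub: "{d. d dvd m div \<Prod>S} \<subseteq> ?D"
    proof
      fix d assume "d \<in> {d. d dvd m div \<Prod>S}"
      then have "d dvd m div \<Prod>S" by simp
      moreover have "m div \<Prod>S dvd m" using divdvd Sdvd S by simp
      ultimately show "d \<in> ?D" using dvd_trans by blast
    qed
    have "(\<Sum>d\<in>{d. d dvd m div \<Prod>S}. p d) = (\<Sum>d\<in>?D. if d dvd m div \<Prod>S then p d else 0)"
      using sum.inter_restrict[OF finD, of p "{d. d dvd m div \<Prod>S}"] sub
      by (simp add: Int_absorb1 Int_commute)
    then show "(-1) ^ card S * (\<Sum>d\<in>{d. d dvd m div \<Prod>S}. p d) = (\<Sum>d\<in>?D. if d dvd m div \<Prod>S then (-1) ^ card S * p d else 0)"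
      by (simp add: sum_distrib_left if_distrib cong: if_cong)
  qed
  also have "\<dots> = (\<Sum>d\<in>?D. \<Sum>S\<in>Pow ?P. if d dvd m div \<Prod>S then (-1) ^ card S * p d else 0)"
    by (rule sum.swap)
  also have "\<dots> = (\<Sum>d\<in>?D. p d * (\<Sum>S\<in>Pow (prime_factors (m div d)). (-1) ^ card S))"
  proof (rule sum.cong[OF refl])
    fix d assume d: "d \<in> ?D"
    have "(\<Sum>S\<in>Pow ?P. if d dvd m div \<Prod>S then (-1) ^ card S * p d else 0)
        = (\<Sum>S\<in>{S \<in> Pow ?P. d dvd m div \<Prod>S}. (-1) ^ card S * p d)"
      by (rule sum.inter_filter[symmetric]) simp
    also have "\<dots> = (\<Sum>S\<in>Pow (prime_factors (m div d)). (-1) ^ card S * p d)"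
      using key d by simp
    also have "\<dots> = p d * (\<Sum>S\<in>Pow (prime_factors (m div d)). (-1) ^ card S)"
      by (simp add: sum_distrib_left mult.commute)
    finally show "(\<Sum>S\<in>Pow ?P. if d dvd m div \<Prod>S then (-1) ^ card S * p d else 0) = p d * (\<Sum>S\<in>Pow (prime_factors (m div d)). (-1) ^ card S)" .
  qed
  also have "\<dots> = (\<Sum>d\<in>?D. if d = m then p d else 0)"
  proof (rule sum.cong[OF refl])
    fix d assume d: "d \<in> ?D"
    have dd: "d dvd m" using d by simp
    have md0: "m div d > 0" using dvd_div_eq_0_iff[OF dd] m0 by simp
    have "prime_factors (m div d) = {} \<longleftrightarrow> m div d = 1" using pf_empty[OF md0] .
    also have "\<dots> \<longleftrightarrow> d = m"
    proof
      assume "m div d = 1"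
      then show "d = m" using dvd_mult_div_cancel[OF dd] by simp
    next
      assume "d = m" then show "m div d = 1" using m0 by simp
    qed
    finally show "p d * (\<Sum>S\<in>Pow (prime_factors (m div d)). (-1) ^ card S) = (if d = m then p d else 0)"
      by (simp add: alt_sum_Pow)
  qed
  also have "\<dots> = p m" using finD m0 by (simp add: sum.delta)
  finally show ?thesis .
qed



definition pp :: "nat \<Rightarrow> int" where "pp m = int (card (Pm m))"

lemma lucas_pp: "m \<ge> 1 \<Longrightarrow> lucas m = (\<Sum>d\<in>{d. d dvd m}. pp d)"
  unfolding pp_def by (rule lucas_sum)

lemma Phi1_pp: "m \<ge> 1 \<Longrightarrow> Phi1 m = pp m"
  unfolding Phi1_def by (rule mobius_inv) (use lucas_pp in auto)

lemma partB: "m \<ge> 1 \<Longrightarrow> real (card (Om m)) = real_of_int (Phi1 m) / real m"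
proof -
  assume m: "m \<ge> 1"
  have "real (m * card (Om m)) = real (card (Pm m))" using card_Om by simp
  then have "real m * real (card (Om m)) = real_of_int (pp m)" by (simp add: pp_def)
  then show ?thesis using m Phi1_pp[OF m] by (simp add: field_simps)
qed

lemma lucas_pos: "lucas n > 0"
  by (induction n rule: lucas.induct) simp_all

lemma lucas_mono: "n \<ge> 1 \<Longrightarrow> lucas n \<le> lucas (Suc n)"
proof -
  assume "n \<ge> 1"
  then obtain k where "n = Suc k" by (cases n) auto
  then show ?thesis using lucas_pos[of k] by simp
qed

lemma lucas_mono_le:
  assumes "1 \<le> a" "a \<le> b" shows "lucas a \<le> lucas b"
  using assms(2)
proof (induction b rule: dec_induct)
  case (step n)
  then show ?case using lucas_mono[of n] assms(1) by simp
qed simp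

lemma lucas_sum_range: "(\<Sum>d\<in>{1..n}. lucas d) = lucas (n + 2) - 3"
proof (induction n)
  case 0
  have "lucas 2 = 3" by (rule lucas2)
  then show ?case by simp
next
  case (Suc n)
  have "(\<Sum>d\<in>{1..Suc n}. lucas d) = (\<Sum>d\<in>{1..n}. lucas d) + lucas (Suc n)" by simp
  also have "\<dots> = lucas (n + 2) - 3 + lucas (Suc n)" using Suc by simp
  also have "\<dots> = lucas (Suc n + 2) - 3" by simp
  finally show ?case .
qed

lemma pp_nonneg: "pp m \<ge> 0" by (simp add: pp_def)

lemma pp_le: "m \<ge> 1 \<Longrightarrow> pp m \<le> lucas m"
proof -
  assume m: "m \<ge> 1"
  have "pp m \<le> (\<Sum>d\<in>{d. d dvd m}. pp d)"
    by (rule member_le_sum) (use m pp_nonneg in auto)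
  then show ?thesis using lucas_pp[OF m] by simp
qed

lemma proper_div_le: "(m::nat) \<ge> 1 \<Longrightarrow> d dvd m \<Longrightarrow> d \<noteq> m \<Longrightarrow> 1 \<le> d \<and> d \<le> m div 2"
proof -
  assume m: "m \<ge> 1" and d: "d dvd m" "d \<noteq> m"
  obtain k where k: "m = d * k" using d(1) by (rule dvdE)
  have "k \<noteq> 0" using k m by auto
  moreover have "k \<noteq> 1" using k d(2) by auto
  ultimately have "k \<ge> 2" by simp
  then have "d * 2 \<le> m" using k by (metis mult_le_mono2)
  moreover have "d \<noteq> 0" using k m by auto
  ultimately show ?thesis by linarith
qed

lemma pp_ge: "m \<ge> 1 \<Longrightarrow> lucas m - (lucas (m div 2 + 2) - 3) \<le> pp m"
proof -
  assume m: "m \<ge> 1"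
  let ?D = "{d. d dvd m}"
  have fin: "finite ?D" using m by simp
  have "lucas m = pp m + (\<Sum>d\<in>?D - {m}. pp d)"
    using lucas_pp[OF m] sum.remove[OF fin, of m pp] by simp
  moreover have "(\<Sum>d\<in>?D - {m}. pp d) \<le> (\<Sum>d\<in>?D - {m}. lucas d)"
    by (rule sum_mono) (use pp_le proper_div_le m in auto)
  moreover have "(\<Sum>d\<in>?D - {m}. lucas d) \<le> (\<Sum>d\<in>{1..m div 2}. lucas d)"
  proof (rule sum_mono2)
    show "?D - {m} \<subseteq> {1..m div 2}"
    proof
      fix x assume "x \<in> ?D - {m}"
      then show "x \<in> {1..m div 2}" using proper_div_le[OF m, of x] by auto
    qed
  qed (use lucas_pos in \<open>auto simp: less_imp_le\<close>)
  ultimately show ?thesis using lucas_sum_range[of "m div 2"] by linarith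
qed

lemma lucas_vals: "lucas 1 = 1" "lucas 2 = 3" "lucas 3 = 4" "lucas 4 = 7" "lucas 5 = 11"
  "lucas 6 = 18" "lucas 7 = 29" "lucas 8 = 47" "lucas 9 = 76" "lucas 10 = 123"
  by (simp_all add: eval_nat_numeral)

lemma div1: "{d::nat. d dvd 1} = {1}" by auto

lemma div7: "{d::nat. d dvd 7} = {1,7}"
proof -
  have "d dvd 7 \<longleftrightarrow> d \<in> {1,7}" for d :: nat
  proof
    assume h: "d dvd 7"
    then have "d \<le> 7" by (simp add: dvd_imp_le)
    then have "d = 0 \<or> d = 1 \<or> d = 2 \<or> d = 3 \<or> d = 4 \<or> d = 5 \<or> d = 6 \<or> d = 7" by presburger
    then show "d \<in> {1,7}" using h by auto
  qed auto
  then show ?thesis by blast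
qed

lemma div8: "{d::nat. d dvd 8} = {1,2,4,8}"
proof -
  have "d dvd 8 \<longleftrightarrow> d \<in> {1,2,4,8}" for d :: nat
  proof
    assume h: "d dvd 8"
    then have "d \<le> 8" by (simp add: dvd_imp_le)
    then have "d = 0 \<or> d = 1 \<or> d = 2 \<or> d = 3 \<or> d = 4 \<or> d = 5 \<or> d = 6 \<or> d = 7 \<or> d = 8" by presburger
    then show "d \<in> {1,2,4,8}" using h by auto
  qed auto
  then show ?thesis by blast
qed

lemma pp1: "pp 1 = 1"
  using lucas_pp[of 1] div1 lucas_vals(1) by simp

lemma pp7: "pp 7 = 28"
  using lucas_pp[of 7] div7 lucas_vals(7) pp1 by simp

lemma pp8: "pp 8 \<ge> 36"
proof -
  have "lucas 8 = pp 1 + pp 2 + pp 4 + pp 8" using lucas_pp[of 8] div8 by simp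
  moreover have "pp 2 \<le> 3" "pp 4 \<le> 7" using pp_le[of 2] pp_le[of 4] lucas_vals by auto
  ultimately show ?thesis using pp1 lucas_vals(8) by linarith
qed

lemma mono_int: "m \<ge> 6 \<Longrightarrow> int (m + 1) * pp m < int m * pp (m + 1)"
proof -
  assume m: "m \<ge> 6"
  consider "m = 6" | "m = 7" | "m = 8" | "m = 9" | "m \<ge> 10" using m by linarith
  then show ?thesis
  proof cases
    case 1
    have "pp 6 \<le> 18" using pp_le[of 6] lucas_vals by simp
    then show ?thesis using 1 pp7 by simp
  next
    case 2
    then show ?thesis using pp7 pp8 by simp
  next
    case 3
    have "pp 8 \<le> 47" using pp_le[of 8] lucas_vals by simp
    moreover have "pp 9 \<ge> 61" using pp_ge[of 9] lucas_vals by simp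
    ultimately show ?thesis using 3 by simp
  next
    case 4
    have "pp 9 \<le> 76" using pp_le[of 9] lucas_vals by simp
    moreover have "pp 10 \<ge> 97" using pp_ge[of 10] lucas_vals by simp
    ultimately show ?thesis using 4 by simp
  next
    case 5
    define n where "n = m - 3"
    have mn: "m = n + 3" and n7: "n \<ge> 7" using 5 by (simp_all add: n_def)
    define a where "a = lucas (n + 1)"
    define b where "b = lucas n"
    have ab: "b \<le> a" "0 < b" using lucas_mono[of n] n7 lucas_pos[of n] by (simp_all add: a_def b_def)
    have L3: "lucas m = 2 * a + b" by (simp add: mn a_def b_def eval_nat_numeral)
    have L4: "lucas (m + 1) = 3 * a + 2 * b" by (simp add: mn a_def b_def eval_nat_numeral)
    have h: "(m + 1) div 2 + 2 \<le> n" using mn n7 by linarith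
    have "lucas ((m + 1) div 2 + 2) \<le> b" unfolding b_def by (rule lucas_mono_le) (use h in auto)
    then have g: "3 * a + b \<le> pp (m + 1)" using pp_ge[of "m + 1"] L4 by simp
    have u: "pp m \<le> 2 * a + b" using pp_le[of m] L3 m by simp
    have "int (m + 1) * pp m \<le> int (m + 1) * (2 * a + b)" using u by (intro mult_left_mono) auto
    also have "\<dots> < int m * (3 * a + b)"
    proof -
      have "int m * (3 * a + b) - int (m + 1) * (2 * a + b) = (int n + 1) * a - b"
        using mn by (simp add: algebra_simps)
      moreover have "(int n + 1) * a - b > 0"
      proof -
        have "(int n + 1) * a \<ge> 8 * a" using n7 ab by (intro mult_right_mono) auto
        then show ?thesis using ab by linarith
      qed
      ultimately show ?thesis by linarith
    qed
    also have "\<dots> \<le> int m * pp (m + 1)" using g by (intro mult_left_mono) auto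
    finally show ?thesis .
  qed
qed

lemma partC1: "m \<ge> 6 \<Longrightarrow> real_of_int (Phi1 m) / real m < real_of_int (Phi1 (m + 1)) / real (m + 1)"
proof -
  assume m: "m \<ge> 6"
  have "real_of_int (int (m + 1) * pp m) < real_of_int (int m * pp (m + 1))"
    using mono_int[OF m] by linarith
  then have "real (m + 1) * real_of_int (pp m) < real m * real_of_int (pp (m + 1))" by simp
  moreover have "Phi1 m = pp m" "Phi1 (m + 1) = pp (m + 1)" using Phi1_pp m by auto
  ultimately show ?thesis using m by (simp add: divide_simps mult.commute)
qed



definition phi :: real where "phi = (1 + sqrt 5) / 2"
definition psi :: real where "psi = (1 - sqrt 5) / 2"

lemma sqrt5: "sqrt 5 * sqrt 5 = 5" "2 < sqrt 5" "sqrt 5 < 3"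
proof -
  show "sqrt 5 * sqrt 5 = 5" by simp
  show "2 < sqrt 5" by (rule real_less_rsqrt) simp
  show "sqrt 5 < 3" by (rule real_less_lsqrt) simp_all
qed

lemma phi_sq: "phi * phi = phi + 1" and psi_sq: "psi * psi = psi + 1"
  unfolding phi_def psi_def using sqrt5(1) by (simp_all add: field_simps)

lemma phi_gt: "phi > 1" and psi_abs: "\<bar>psi\<bar> < 1"
  unfolding phi_def psi_def using sqrt5 by auto

lemma lucas_closed: "real_of_int (lucas n) = phi ^ n + psi ^ n"
proof (induction n rule: lucas.induct)
  case 1 then show ?case by simp
next
  case 2 then show ?case by (simp add: phi_def psi_def field_simps)
next
  case (3 n)
  have "phi ^ Suc (Suc n) = phi ^ Suc n + phi ^ n"
    using phi_sq by (simp add: algebra_simps) (metis distrib_left mult.assoc mult.left_commute mult_1_right)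
  moreover have "psi ^ Suc (Suc n) = psi ^ Suc n + psi ^ n"
    using psi_sq by (simp add: algebra_simps) (metis distrib_left mult.assoc mult.left_commute mult_1_right)
  ultimately show ?case using 3 by simp
qed

lemma phi_pos: "phi > 0" using phi_gt by simp

lemma lucas_le: "real_of_int (lucas n) \<le> 2 * phi ^ n"
proof -
  have "psi ^ n \<le> \<bar>psi\<bar> ^ n" by (metis power_abs abs_ge_self)
  also have "\<dots> \<le> 1" using psi_abs by (simp add: power_le_one)
  also have "1 \<le> phi ^ n" using phi_gt by simp
  finally show ?thesis using lucas_closed[of n] by simp
qed

definition e :: "nat \<Rightarrow> real" where "e m = real_of_int (pp m) / phi ^ m"

lemma div2_at_top: "filterlim (\<lambda>m::nat. m div 2) at_top sequentially"
  unfolding filterlim_at_top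
proof
  fix Z :: nat
  show "eventually (\<lambda>m. Z \<le> m div 2) sequentially"
    unfolding eventually_sequentially by (rule exI[of _ "2 * Z"]) auto
qed

lemma e_err: "m \<ge> 1 \<Longrightarrow> \<bar>e m - real_of_int (lucas m) / phi ^ m\<bar> \<le> 2 * phi^2 * (1 / phi) ^ (m div 2)"
proof -
  assume m: "m \<ge> 1"
  let ?h = "m div 2"
  have i1: "pp m \<le> lucas m" using pp_le[OF m] .
  have i2: "lucas m - lucas (?h + 2) \<le> pp m" using pp_ge[OF m] by linarith
  have "\<bar>real_of_int (pp m) - real_of_int (lucas m)\<bar> \<le> real_of_int (lucas (?h + 2))"
    using i1 i2 by linarith
  also have "\<dots> \<le> 2 * phi ^ (?h + 2)" by (rule lucas_le)
  finally have b: "\<bar>real_of_int (pp m) - real_of_int (lucas m)\<bar> \<le> 2 * phi ^ (?h + 2)" .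
  have pm: "phi ^ m > 0" using phi_pos by simp
  have ph: "phi ^ ?h > 0" using phi_pos by simp
  have "phi ^ ?h * phi ^ ?h \<le> phi ^ m"
  proof -
    have "phi ^ ?h * phi ^ ?h = phi ^ (?h + ?h)" by (simp add: power_add)
    also have "\<dots> \<le> phi ^ m" using phi_gt by (intro power_increasing) auto
    finally show ?thesis .
  qed
  have "\<bar>e m - real_of_int (lucas m) / phi ^ m\<bar> = \<bar>real_of_int (pp m) - real_of_int (lucas m)\<bar> / phi ^ m"
    unfolding e_def using pm by (simp add: diff_divide_distrib[symmetric] abs_divide)
  also have "\<dots> \<le> 2 * phi ^ (?h + 2) / phi ^ m"
    using b pm by (simp add: divide_right_mono)
  also have "\<dots> \<le> 2 * phi ^ (?h + 2) / (phi ^ ?h * phi ^ ?h)"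
    using \<open>phi ^ ?h * phi ^ ?h \<le> phi ^ m\<close> ph phi_pos
    by (intro divide_left_mono) (auto intro: mult_pos_pos)
  also have "\<dots> = 2 * phi^2 * (1 / phi) ^ ?h"
    using ph by (simp add: power_add power_one_over field_simps power2_eq_square)
  finally show ?thesis .
qed

lemma e_lim: "e \<longlonglongrightarrow> 1"
proof -
  have b0: "(\<lambda>m. 2 * phi^2 * (1 / phi) ^ (m div 2)) \<longlonglongrightarrow> 0"
  proof -
    have "(\<lambda>n. (1 / phi) ^ n) \<longlonglongrightarrow> 0"
      by (rule LIMSEQ_realpow_zero) (use phi_gt in auto)
    then have "(\<lambda>m. (1 / phi) ^ (m div 2)) \<longlonglongrightarrow> 0"
      by (rule filterlim_compose[OF _ div2_at_top])
    then show ?thesis using tendsto_mult_left[of _ 0 sequentially "2 * phi^2"] by simp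
  qed
  have d0: "(\<lambda>m. e m - real_of_int (lucas m) / phi ^ m) \<longlonglongrightarrow> 0"
  proof (rule tendsto_0_le[OF b0, where K=1])
    have "norm (e m - real_of_int (lucas m) / phi ^ m) \<le> norm (2 * phi^2 * (1 / phi) ^ (m div 2)) * 1"
      if "m \<ge> 1" for m
    proof -
      have "norm (e m - real_of_int (lucas m) / phi ^ m) \<le> 2 * phi^2 * (1 / phi) ^ (m div 2)"
        using e_err[OF that] by simp
      also have "\<dots> \<le> norm (2 * phi^2 * (1 / phi) ^ (m div 2)) * 1" by simp
      finally show ?thesis .
    qed
    then show "eventually (\<lambda>m. norm (e m - real_of_int (lucas m) / phi ^ m) \<le> norm (2 * phi^2 * (1 / phi) ^ (m div 2)) * 1) sequentially"
      unfolding eventually_sequentially by blast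
  qed
  have "(\<lambda>m. (psi / phi) ^ m) \<longlonglongrightarrow> 0"
  proof (rule LIMSEQ_power_zero)
    have "\<bar>psi / phi\<bar> = \<bar>psi\<bar> / phi" using phi_pos by (simp add: abs_divide)
    also have "\<dots> < 1" using psi_abs phi_gt by (simp add: divide_less_eq)
    finally show "norm (psi / phi) < 1" by simp
  qed
  then have "(\<lambda>m. 1 + (psi / phi) ^ m) \<longlonglongrightarrow> 1 + 0" by (intro tendsto_add) auto
  moreover have "real_of_int (lucas m) / phi ^ m = 1 + (psi / phi) ^ m" for m
    using phi_pos by (simp add: lucas_closed power_divide field_simps)
  ultimately have l1: "(\<lambda>m. real_of_int (lucas m) / phi ^ m) \<longlonglongrightarrow> 1" by simp
  have "(\<lambda>m. (e m - real_of_int (lucas m) / phi ^ m) + real_of_int (lucas m) / phi ^ m) \<longlonglongrightarrow> 0 + 1"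
    by (rule tendsto_add[OF d0 l1])
  then show ?thesis by simp
qed

lemma ratio_alg:
  fixes x y t M p :: real
  assumes "t \<noteq> 0" "M > 0" "y \<noteq> 0"
  shows "(x * (p * t) / (M + 1)) / (y * t / M) = p * (x / y) * (M / (M + 1))"
proof -
  have "M + 1 \<noteq> 0" using assms by simp
  then show ?thesis using assms by (simp add: divide_simps)
qed

lemma ratio_eq:
  assumes m: "m \<ge> 1"
  shows "(real_of_int (Phi1 (m + 1)) / real (m + 1)) / (real_of_int (Phi1 m) / real m)
       = phi * (e (Suc m) / e m) * (real m / real (Suc m))"
proof -
  have P: "real_of_int (Phi1 m) = e m * phi ^ m" "real_of_int (Phi1 (m + 1)) = e (Suc m) * phi ^ Suc m"
    using Phi1_pp[OF m] Phi1_pp[of "m + 1"] phi_pos by (simp_all add: e_def)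
  show ?thesis
  proof (cases "e m = 0")
    case True
    then show ?thesis using P by simp
  next
    case False
    have n1: "phi ^ m \<noteq> 0" using phi_pos by simp
    have n3: "real m > 0" using m by simp
    have "(real_of_int (Phi1 (m + 1)) / real (m + 1)) / (real_of_int (Phi1 m) / real m)
        = (e (Suc m) * (phi * phi ^ m) / (real m + 1)) / (e m * phi ^ m / real m)"
      using P by simp
    also have "\<dots> = phi * (e (Suc m) / e m) * (real m / (real m + 1))"
      by (rule ratio_alg[OF n1 n3 False])
    finally show ?thesis by simp
  qed
qed

theorem partC2: "(\<lambda>m. (real_of_int (Phi1 (m + 1)) / real (m + 1)) / (real_of_int (Phi1 m) / real m))
         \<longlonglongrightarrow> (1 + sqrt 5) / 2"
proof -
  have eS: "(\<lambda>m. e (Suc m)) \<longlonglongrightarrow> 1" using e_lim by (rule LIMSEQ_Suc)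
  have "(\<lambda>m. phi * (e (Suc m) / e m) * (real m / real (Suc m))) \<longlonglongrightarrow> phi * (1 / 1) * 1"
    by (intro tendsto_mult tendsto_divide tendsto_const eS e_lim LIMSEQ_n_over_Suc_n) simp
  then have "(\<lambda>m. phi * (e (Suc m) / e m) * (real m / real (Suc m))) \<longlonglongrightarrow> (1 + sqrt 5) / 2"
    by (simp add: phi_def)
  moreover have "eventually (\<lambda>m. phi * (e (Suc m) / e m) * (real m / real (Suc m)) =
      (real_of_int (Phi1 (m + 1)) / real (m + 1)) / (real_of_int (Phi1 m) / real m)) sequentially"
    unfolding eventually_sequentially using ratio_eq by (intro exI[of _ 1]) auto
  ultimately show ?thesis by (rule Lim_transform_eventually)
qed


theorem theorem1:
  shows "(\<forall>m::nat. m \<ge> 1 \<longrightarrow>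
            int (card {x \<in> {1..3::real}. (fmap ^^ m) x = x}) = lucas m)
    \<and> (\<forall>m::nat. m \<ge> 1 \<longrightarrow>
            real (card {orbit fmap x | x. x \<in> {1..3::real} \<and> has_min_period fmap m x})
              = real_of_int (Phi1 m) / real m)
    \<and> (\<forall>m::nat. m \<ge> 6 \<longrightarrow>
            real_of_int (Phi1 m) / real m < real_of_int (Phi1 (m + 1)) / real (m + 1))
    \<and> ((\<lambda>m. (real_of_int (Phi1 (m + 1)) / real (m + 1)) / (real_of_int (Phi1 m) / real m))
         \<longlonglongrightarrow> (1 + sqrt 5) / 2)"
proof (intro conjI allI impI)
  fix m :: nat assume "m \<ge> 1"
  then show "int (card {x \<in> {1..3::real}. (fmap ^^ m) x = x}) = lucas m" by (rule partA)
next
  fix m :: nat assume m: "m \<ge> 1"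
  show "real (card {orbit fmap x | x. x \<in> {1..3::real} \<and> has_min_period fmap m x})
              = real_of_int (Phi1 m) / real m"
    using partB[OF m] unfolding Om_def .
next
  fix m :: nat assume "m \<ge> 6"
  then show "real_of_int (Phi1 m) / real m < real_of_int (Phi1 (m + 1)) / real (m + 1)"
    by (rule partC1)
next
  show "(\<lambda>m. (real_of_int (Phi1 (m + 1)) / real (m + 1)) / (real_of_int (Phi1 m) / real m))
         \<longlonglongrightarrow> (1 + sqrt 5) / 2" by (rule partC2)
qed

end
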